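(* For any central, essential real hyperplane arrangement $\mathcal{A}$, the graph $G_1$ has diameter exactly $|L_1|$ (the number of hyperplanes). For any choice of base chamber $c_0$ of $\mathcal{A}$, the graph $G_2$ has diameter at least $|L_2|$.
   Context: A central, essential arrangement $\mathcal{A}$ is a finite set of linear hyperplanes in $\mathbb{R}^d$ with common intersection $\{0\}$; $L_i$ is the set of codimension-$i$ subspaces obtained as intersections of hyperplanes of $\mathcal{A}$, so $L_1=\mathcal{A}$. Chambers are connected components of the complement of the union of hyperplanes; $L_1(c,c')$ is the set of hyperplanes separating chambers $c,c'$. $G_1$ is the graph on chambers with $c,c'$ adjacent iff $|L_1(c,c')|=1$. A minimal gallery is a shortest path in $G_1$; one from $c_0$ to $-c_0$ crosses every hyperplane exactly once. For minimal galleries $r,r'$ from $c_0$ to $-c_0$, $L_2(r,r')$ is the set of $X\in L_2$ such that $r,r'$ cross the hyperplanes containing $X$ in different orders. $G_2$ is the graph whose vertices are the minimal galleries from $c_0$ to $-c_0$, with $r,r'$ adjacent iff $|L_2(r,r')|=1$. *)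

theory Defs
  imports "HOL-Analysis.Analysis" "HOL-Library.Extended_Nat"
begin

definition is_walk :: "'v set \<Rightarrow> ('v \<Rightarrow> 'v \<Rightarrow> bool) \<Rightarrow> 'v list \<Rightarrow> bool" where
  "is_walk V E p \<longleftrightarrow> p \<noteq> [] \<and> set p \<subseteq> V \<and>
     (\<forall>i. Suc i < length p \<longrightarrow> E (p ! i) (p ! Suc i))"

text \<open>Graph distance (number of edges of a shortest walk), infinite if no walk exists.\<close>
definition gdist :: "'v set \<Rightarrow> ('v \<Rightarrow> 'v \<Rightarrow> bool) \<Rightarrow> 'v \<Rightarrow> 'v \<Rightarrow> enat" where
  "gdist V E u v = (INF p \<in> {p. is_walk V E p \<and> hd p = u \<and> last p = v}. enat (length p - 1))"

definition gdiameter :: "'v set \<Rightarrow> ('v \<Rightarrow> 'v \<Rightarrow> bool) \<Rightarrow> enat" where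
  "gdiameter V E = (SUP u \<in> V. SUP v \<in> V. gdist V E u v)"

definition linear_hyperplane :: "'a::euclidean_space set \<Rightarrow> bool" where
  "linear_hyperplane H \<longleftrightarrow> (\<exists>a. a \<noteq> 0 \<and> H = {x. a \<bullet> x = 0})"

definition central_essential_arrangement :: "'a::euclidean_space set set \<Rightarrow> bool" where
  "central_essential_arrangement A \<longleftrightarrow>
     finite A \<and> (\<forall>H\<in>A. linear_hyperplane H) \<and> \<Inter>A = {0}"

definition chambers :: "'a::euclidean_space set set \<Rightarrow> 'a set set" where
  "chambers A = components (- \<Union>A)"

definition Lcodim :: "'a::euclidean_space set set \<Rightarrow> nat \<Rightarrow> 'a set set" where
  "Lcodim A i = {X. \<exists>S. S \<subseteq> A \<and> S \<noteq> {} \<and> X = \<Inter>S \<and> dim X + i = DIM('a)}"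

definition separates :: "'a::euclidean_space set \<Rightarrow> 'a set \<Rightarrow> 'a set \<Rightarrow> bool" where
  "separates H c c' \<longleftrightarrow>
     (\<exists>a. a \<noteq> 0 \<and> H = {x. a \<bullet> x = 0} \<and> (\<exists>x\<in>c. \<exists>y\<in>c'. (a \<bullet> x) * (a \<bullet> y) < 0))"

definition L1sep :: "'a::euclidean_space set set \<Rightarrow> 'a set \<Rightarrow> 'a set \<Rightarrow> 'a set set" where
  "L1sep A c c' = {H \<in> A. separates H c c'}"

definition adj1 :: "'a::euclidean_space set set \<Rightarrow> 'a set \<Rightarrow> 'a set \<Rightarrow> bool" where
  "adj1 A c c' \<longleftrightarrow> card (L1sep A c c') = 1"

definition min_galleries :: "'a::euclidean_space set set \<Rightarrow> 'a set \<Rightarrow> 'a set list set" where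
  "min_galleries A c0 = {r. is_walk (chambers A) (adj1 A) r \<and> hd r = c0 \<and> last r = uminus ` c0 \<and>
      enat (length r - 1) = gdist (chambers A) (adj1 A) c0 (uminus ` c0)}"

definition crossings :: "'a::euclidean_space set set \<Rightarrow> 'a set list \<Rightarrow> 'a set list" where
  "crossings A r = map (\<lambda>i. THE H. L1sep A (r ! i) (r ! Suc i) = {H}) [0..<length r - 1]"

text \<open>L_2(r,r'): codimension-2 flats X such that r, r' cross the hyperplanes containing X
  in different orders.\<close>
definition L2sep :: "'a::euclidean_space set set \<Rightarrow> 'a set list \<Rightarrow> 'a set list \<Rightarrow> 'a set set" where
  "L2sep A r r' = {X \<in> Lcodim A 2.
      filter (\<lambda>H. X \<subseteq> H) (crossings A r) \<noteq> filter (\<lambda>H. X \<subseteq> H) (crossings A r')}"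

definition adj2 :: "'a::euclidean_space set set \<Rightarrow> 'a set list \<Rightarrow> 'a set list \<Rightarrow> bool" where
  "adj2 A r r' \<longleftrightarrow> card (L2sep A r r') = 1"

end

theory Submission imports Defs begin

lemma hyp_prop:
  fixes a b :: "'a::euclidean_space"
  assumes "a \<noteq> 0" "{x. a \<bullet> x = 0} \<subseteq> {x. b \<bullet> x = 0}"
  shows "\<exists>k. b = k *\<^sub>R a"
proof -
  define k where "k = (a \<bullet> b) / (a \<bullet> a)"
  have aa: "a \<bullet> a \<noteq> 0" using assms(1) by simp
  have "a \<bullet> (b - k *\<^sub>R a) = 0" using aa by (simp add: k_def inner_diff_right inner_commute)
  hence "b \<bullet> (b - k *\<^sub>R a) = 0" using assms(2) by blast
  hence "(b - k *\<^sub>R a) \<bullet> (b - k *\<^sub>R a) = 0"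
    using \<open>a \<bullet> (b - k *\<^sub>R a) = 0\<close> by (simp add: inner_diff_left)
  hence "b - k *\<^sub>R a = 0" by simp
  thus ?thesis by auto
qed

lemma real_opp1:
  fixes a b t :: real
  assumes "a * b < 0" "t < a/(a-b)"
  shows "(a + t*(b-a) > 0 \<longleftrightarrow> a > 0) \<and> a + t*(b-a) \<noteq> 0"
proof (cases "a > 0")
  case True hence "b < 0" using assms(1) by (simp add: mult_less_0_iff)
  hence "t * (a - b) < a" using assms(2) True by (simp add: field_simps)
  thus ?thesis using True by (simp add: algebra_simps)
next
  case False hence "a < 0" "b > 0" using assms(1) by (auto simp: mult_less_0_iff)
  hence "t * (a - b) > a" using assms(2) by (simp add: field_simps)
  thus ?thesis using \<open>a<0\<close> by (simp add: algebra_simps)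
qed
lemma real_opp2:
  fixes a b t :: real
  assumes "a * b < 0" "t > a/(a-b)"
  shows "(a + t*(b-a) > 0 \<longleftrightarrow> b > 0) \<and> a + t*(b-a) \<noteq> 0"
proof (cases "a > 0")
  case True hence "b < 0" using assms(1) by (simp add: mult_less_0_iff)
  hence "t * (a - b) > a" using assms(2) True by (simp add: field_simps)
  thus ?thesis using True \<open>b<0\<close> by (simp add: algebra_simps)
next
  case False hence "a < 0" "b > 0" using assms(1) by (auto simp: mult_less_0_iff)
  hence "t * (a - b) < a" using assms(2) by (simp add: field_simps)
  thus ?thesis using \<open>b>0\<close> by (simp add: algebra_simps)
qed
lemma real_opp3:
  fixes a b :: real
  assumes "a * b < 0"
  shows "0 < a/(a-b)" "a/(a-b) < 1" "a + (a/(a-b))*(b-a) = 0"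
  using assms by (auto simp: mult_less_0_iff field_simps)
lemma real_same:
  fixes a b t :: real
  assumes "a * b > 0" "0 \<le> t" "t \<le> 1"
  shows "(a + t*(b-a) > 0 \<longleftrightarrow> a > 0) \<and> a + t*(b-a) \<noteq> 0"
proof (cases "a > 0")
  case True hence "b > 0" using assms(1) zero_less_mult_pos by blast
  have "a + t*(b-a) = (1-t)*a + t*b" by (simp add: algebra_simps)
  moreover have "(1-t)*a + t*b > 0" using True \<open>b>0\<close> assms
    by (smt (verit) mult_nonneg_nonneg mult_pos_pos)
  ultimately show ?thesis using True by simp
next
  case False hence "a < 0" "b < 0" using assms(1) by (auto simp: zero_less_mult_iff)
  have "a + t*(b-a) = (1-t)*a + t*b" by (simp add: algebra_simps)
  moreover have "(1-t)*a + t*b < 0" using \<open>a<0\<close> \<open>b<0\<close> assms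
    by (smt (verit) mult_nonneg_nonpos mult_pos_neg)
  ultimately show ?thesis using False by simp
qed


lemma is_walk_Cons:
  "is_walk V E (a # p) \<longleftrightarrow> a \<in> V \<and> (p = [] \<or> (is_walk V E p \<and> E a (hd p)))"
proof
  assume w: "is_walk V E (a # p)"
  show "a \<in> V \<and> (p = [] \<or> (is_walk V E p \<and> E a (hd p)))"
  proof (cases p)
    case Nil thus ?thesis using w by (auto simp: is_walk_def)
  next
    case (Cons b q)
    have "E a b" using w Cons unfolding is_walk_def by force
    moreover have "\<forall>i. Suc i < length p \<longrightarrow> E (p ! i) (p ! Suc i)"
    proof (intro allI impI)
      fix i assume "Suc i < length p"
      thus "E (p ! i) (p ! Suc i)" using w unfolding is_walk_def
        by (metis Suc_less_eq length_Cons nth_Cons_Suc)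
    qed
    ultimately show ?thesis using w Cons unfolding is_walk_def by auto
  qed
next
  assume h: "a \<in> V \<and> (p = [] \<or> (is_walk V E p \<and> E a (hd p)))"
  show "is_walk V E (a # p)"
  proof (cases p)
    case Nil thus ?thesis using h by (auto simp: is_walk_def)
  next
    case (Cons b q)
    show ?thesis unfolding is_walk_def
    proof (intro conjI allI impI)
      show "a # p \<noteq> []" by simp
      show "set (a # p) \<subseteq> V" using h Cons by (auto simp: is_walk_def)
      fix i assume i: "Suc i < length (a # p)"
      show "E ((a # p) ! i) ((a # p) ! Suc i)"
      proof (cases i)
        case 0 thus ?thesis using h Cons by simp
      next
        case (Suc j) thus ?thesis using h Cons i unfolding is_walk_def by auto
      qed
    qed
  qed
qed

lemma gdist_eqI:
  assumes "is_walk V E p" "hd p = u" "last p = v" "length p = Suc n"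
    and "\<And>q. is_walk V E q \<Longrightarrow> hd q = u \<Longrightarrow> last q = v \<Longrightarrow> n \<le> length q - 1"
  shows "gdist V E u v = enat n"
  unfolding gdist_def
proof (rule antisym)
  show "(INF p\<in>{p. is_walk V E p \<and> hd p = u \<and> last p = v}. enat (length p - 1)) \<le> enat n"
    using assms(1-4) by (intro INF_lower2[of p]) auto
  show "enat n \<le> (INF p\<in>{p. is_walk V E p \<and> hd p = u \<and> last p = v}. enat (length p - 1))"
    using assms(5) by (intro INF_greatest) auto
qed

lemma gdist_lowerI:
  assumes "\<And>q. is_walk V E q \<Longrightarrow> hd q = u \<Longrightarrow> last q = v \<Longrightarrow> n \<le> length q - 1"
  shows "enat n \<le> gdist V E u v"
  unfolding gdist_def using assms by (intro INF_greatest) auto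

lemma walk_bound:
  fixes f :: "'v \<Rightarrow> 'v \<Rightarrow> 'b set"
  assumes tri: "\<And>a b c. a \<in> V \<Longrightarrow> b \<in> V \<Longrightarrow> c \<in> V \<Longrightarrow> f a c \<subseteq> f a b \<union> f b c"
    and fin: "\<And>a b. a \<in> V \<Longrightarrow> b \<in> V \<Longrightarrow> finite (f a b)"
    and edge: "\<And>a b. a \<in> V \<Longrightarrow> b \<in> V \<Longrightarrow> E a b \<Longrightarrow> card (f a b) \<le> 1"
    and refl: "\<And>a. a \<in> V \<Longrightarrow> f a a = {}"
  shows "is_walk V E p \<Longrightarrow> card (f (hd p) (last p)) \<le> length p - 1"
proof (induction p)
  case Nil thus ?case by (simp add: is_walk_def)
next
  case (Cons a p)
  show ?case
  proof (cases p)
    case Nil thus ?thesis using Cons refl by (simp add: is_walk_def)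
  next
    case Cons2: (Cons b q)
    have w: "is_walk V E p" "E a b" "a \<in> V" using Cons.prems Cons2 by (auto simp: is_walk_Cons)
    have bV: "b \<in> V" "last p \<in> V" using w(1) Cons2 by (auto simp: is_walk_def)
    have "card (f a (last p)) \<le> card (f a b \<union> f b (last p))"
      using tri[OF w(3) bV] fin w(3) bV by (intro card_mono) auto
    also have "\<dots> \<le> card (f a b) + card (f b (last p))" by (rule card_Un_le)
    also have "\<dots> \<le> 1 + (length p - 1)" using edge[OF w(3) bV(1) w(2)] Cons.IH[OF w(1)] Cons2 by simp
    finally show ?thesis using Cons2 by simp
  qed
qed

locale arr =
  fixes A :: "'a::euclidean_space set set"
  assumes cea: "central_essential_arrangement A"
begin

lemma finA: "finite A" using cea by (simp add: central_essential_arrangement_def)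

definition nv :: "'a set \<Rightarrow> 'a" where
  "nv H = (SOME a. a \<noteq> 0 \<and> H = {x. a \<bullet> x = 0})"

lemma nv: "H \<in> A \<Longrightarrow> nv H \<noteq> 0 \<and> H = {x. nv H \<bullet> x = 0}"
  unfolding nv_def
  by (rule someI_ex) (use cea in \<open>auto simp: central_essential_arrangement_def linear_hyperplane_def\<close>)

definition U :: "'a set" where "U = - \<Union>A"

lemma U_nz: "x \<in> U \<Longrightarrow> H \<in> A \<Longrightarrow> nv H \<bullet> x \<noteq> 0"
  using nv[of H] unfolding U_def by auto

lemma in_U: "(\<forall>H\<in>A. nv H \<bullet> x \<noteq> 0) \<Longrightarrow> x \<in> U"
  using nv unfolding U_def by auto

definition cell :: "'a \<Rightarrow> 'a set" where
  "cell x = {y \<in> U. \<forall>H\<in>A. (nv H \<bullet> y > 0) \<longleftrightarrow> (nv H \<bullet> x > 0)}"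

lemma cell_alt: "x \<in> U \<Longrightarrow> cell x = {y. \<forall>H\<in>A. if nv H \<bullet> x > 0 then nv H \<bullet> y > 0 else nv H \<bullet> y < 0}"
proof -
  assume x: "x \<in> U"
  show ?thesis
  proof (intro set_eqI iffI)
    fix y assume "y \<in> cell x"
    then show "y \<in> {y. \<forall>H\<in>A. if nv H \<bullet> x > 0 then nv H \<bullet> y > 0 else nv H \<bullet> y < 0}"
      unfolding cell_def using U_nz by (auto simp: less_le)
  next
    fix y assume y: "y \<in> {y. \<forall>H\<in>A. if nv H \<bullet> x > 0 then nv H \<bullet> y > 0 else nv H \<bullet> y < 0}"
    hence "y \<in> U" by (intro in_U) (auto split: if_splits)
    thus "y \<in> cell x" using y unfolding cell_def by (auto split: if_splits)
  qed
qed

lemma open_cell: "x \<in> U \<Longrightarrow> open (cell x)"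
proof -
  assume x: "x \<in> U"
  have "cell x = (\<Inter>H\<in>A. {y. if nv H \<bullet> x > 0 then nv H \<bullet> y > 0 else nv H \<bullet> y < 0})"
    using cell_alt[OF x] by auto
  also have "open \<dots>"
    apply (intro open_INT finA ballI)
    subgoal for H by (cases "nv H \<bullet> x > 0") (simp_all add: open_halfspace_gt open_halfspace_lt)
    done
  finally show ?thesis .
qed

lemma convex_cell: "x \<in> U \<Longrightarrow> convex (cell x)"
proof -
  assume x: "x \<in> U"
  have "cell x = (\<Inter>H\<in>A. {y. if nv H \<bullet> x > 0 then nv H \<bullet> y > 0 else nv H \<bullet> y < 0})"
    using cell_alt[OF x] by auto
  also have "convex \<dots>"
    apply (intro convex_INT ballI)
    subgoal for H by (cases "nv H \<bullet> x > 0") (simp_all add: convex_halfspace_gt convex_halfspace_lt)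
    done
  finally show ?thesis .
qed

lemma self_cell: "x \<in> U \<Longrightarrow> x \<in> cell x" unfolding cell_def by auto

lemma cell_eq: "y \<in> cell x \<Longrightarrow> cell y = cell x" unfolding cell_def by auto

lemma sign_const:
  assumes "connected D" "D \<subseteq> U" "p \<in> D" "q \<in> D" "H \<in> A"
  shows "nv H \<bullet> p > 0 \<longleftrightarrow> nv H \<bullet> q > 0"
proof (rule ccontr)
  assume "\<not> ?thesis"
  then consider "nv H \<bullet> p > 0" "nv H \<bullet> q \<le> 0" | "nv H \<bullet> q > 0" "nv H \<bullet> p \<le> 0" by linarith
  then obtain z where "z \<in> D" "nv H \<bullet> z = 0"
  proof cases
    case 1 thus ?thesis using connected_ivt_hyperplane[OF assms(1) assms(4) assms(3), of "nv H" 0] that by auto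
  next
    case 2 thus ?thesis using connected_ivt_hyperplane[OF assms(1) assms(3) assms(4), of "nv H" 0] that by auto
  qed
  thus False using U_nz assms by auto
qed

lemma chambers_eq: "chambers A = cell ` U"
proof (intro set_eqI iffI)
  have comp: "cell x \<in> components U" if x: "x \<in> U" for x
    unfolding in_components_maximal
  proof (intro conjI allI impI)
    show "cell x \<noteq> {}" using self_cell x by auto
    show "cell x \<subseteq> U" unfolding cell_def by auto
    show "connected (cell x)" using convex_cell[OF x] convex_connected by blast
    fix D assume D: "D \<noteq> {} \<and> cell x \<subseteq> D \<and> D \<subseteq> U \<and> connected D"
    have "D \<subseteq> cell x"
    proof
      fix y assume "y \<in> D"
      moreover have "x \<in> D" using D self_cell x by auto
      ultimately show "y \<in> cell x" unfolding cell_def using sign_const[of D y x] D by auto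
    qed
    thus "D = cell x" using D by auto
  qed
  fix C
  { assume "C \<in> chambers A"
    hence C: "C \<in> components U" by (simp add: chambers_def U_def)
    then obtain x where "x \<in> C" using in_components_nonempty by blast
    moreover have "x \<in> U" using C \<open>x \<in> C\<close> in_components_subset by blast
    ultimately have "C = cell x" using components_nonoverlap[OF C comp] self_cell by blast
    thus "C \<in> cell ` U" using \<open>x \<in> U\<close> by blast }
  { assume "C \<in> cell ` U"
    thus "C \<in> chambers A" using comp by (auto simp: chambers_def U_def) }
qed

definition Dset :: "'a \<Rightarrow> 'a \<Rightarrow> 'a set set" where
  "Dset x y = {H\<in>A. (nv H \<bullet> x > 0) \<noteq> (nv H \<bullet> y > 0)}"

lemma prod_neg_iff: "(a::real) \<noteq> 0 \<Longrightarrow> b \<noteq> 0 \<Longrightarrow> a * b < 0 \<longleftrightarrow> (a > 0) \<noteq> (b > 0)"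
  by (auto simp: mult_less_0_iff)

lemma L1sep_cell:
  assumes x: "x \<in> U" and y: "y \<in> U"
  shows "L1sep A (cell x) (cell y) = Dset x y"
proof (intro set_eqI iffI)
  fix H assume "H \<in> L1sep A (cell x) (cell y)"
  then obtain a p q where H: "H \<in> A" "a \<noteq> 0" "H = {x. a \<bullet> x = 0}" "p \<in> cell x" "q \<in> cell y"
    "(a \<bullet> p) * (a \<bullet> q) < 0"
    unfolding L1sep_def separates_def by blast
  obtain k where k: "a = k *\<^sub>R nv H" using hyp_prop[of "nv H" a] nv[OF H(1)] H by auto
  have "(a \<bullet> p) * (a \<bullet> q) = k^2 * ((nv H \<bullet> p) * (nv H \<bullet> q))"
    by (simp add: k power2_eq_square)
  hence "(nv H \<bullet> p) * (nv H \<bullet> q) < 0" using H(6)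
    by (metis mult_nonneg_nonneg not_less zero_le_power2)
  moreover have "p \<in> U" "q \<in> U" using H unfolding cell_def by auto
  ultimately have "(nv H \<bullet> p > 0) \<noteq> (nv H \<bullet> q > 0)" using prod_neg_iff U_nz H(1) by blast
  thus "H \<in> Dset x y" using H unfolding cell_def Dset_def by auto
next
  fix H assume "H \<in> Dset x y"
  hence H: "H \<in> A" "(nv H \<bullet> x > 0) \<noteq> (nv H \<bullet> y > 0)" unfolding Dset_def by auto
  have "(nv H \<bullet> x) * (nv H \<bullet> y) < 0" using prod_neg_iff U_nz H x y by blast
  thus "H \<in> L1sep A (cell x) (cell y)"
    unfolding L1sep_def separates_def using nv[OF H(1)] H(1) self_cell[OF x] self_cell[OF y] by blast
qed

lemma neg_U: "x \<in> U \<Longrightarrow> -x \<in> U"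
  using U_nz by (intro in_U) auto

lemma cell_neg: "x \<in> U \<Longrightarrow> uminus ` cell x = cell (-x)"
proof (intro set_eqI iffI)
  fix y assume "x \<in> U" "y \<in> cell (-x)"
  then have "-y \<in> cell x" unfolding cell_def using neg_U U_nz by (auto simp: less_le)
  thus "y \<in> uminus ` cell x" by (metis image_eqI minus_minus)
next
  fix y assume "x \<in> U" "y \<in> uminus ` cell x"
  then obtain z where "z \<in> cell x" "y = -z" by auto
  moreover have "\<And>H. H \<in> A \<Longrightarrow> nv H \<bullet> z \<noteq> 0 \<and> nv H \<bullet> x \<noteq> 0"
    using \<open>z \<in> cell x\<close> \<open>x \<in> U\<close> U_nz unfolding cell_def by auto
  ultimately show "y \<in> cell (-x)" using \<open>x \<in> U\<close> unfolding cell_def using neg_U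
    by (auto simp: less_le)
qed

lemma Dset_sym: "Dset x y = Dset y x" unfolding Dset_def by auto

lemma interior_Union_lowdim:
  fixes F :: "'b::euclidean_space set set"
  assumes "finite F" "\<And>S. S \<in> F \<Longrightarrow> closed S \<and> dim S < DIM('b)"
  shows "interior (\<Union>F) = {}"
  using assms
proof (induction F rule: finite_induct)
  case empty thus ?case by simp
next
  case (insert S F)
  have "interior (\<Union>F \<union> S) = interior (\<Union>F)"
    by (rule interior_closed_Un_empty_interior)
       (use insert in \<open>auto intro!: closed_Union empty_interior_lowdim\<close>)
  thus ?case using insert by (simp add: Un_commute)
qed

lemma hyp_in_A: "H \<in> A \<Longrightarrow> subspace H \<and> closed H \<and> dim H = DIM('a) - 1"
  using nv[of H] by (metis subspace_hyperplane closed_hyperplane dim_hyperplane)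

lemma DIM_pos: "DIM('a) - 1 < DIM('a)" by simp

lemma U_ne: "U \<noteq> {}"
proof
  assume "U = {}"
  hence "\<Union>A = UNIV" unfolding U_def by auto
  moreover have "interior (\<Union>A) = {}"
    using finA hyp_in_A by (intro interior_Union_lowdim) auto
  ultimately show False by simp
qed

lemma dim_pair:
  assumes "H \<in> A" "G \<in> A" "H \<noteq> G"
  shows "dim (span (insert x (H \<inter> G))) < DIM('a)"
proof -
  have sH: "subspace H" "dim H = DIM('a) - 1" and sG: "subspace G" "dim G = DIM('a) - 1"
    using hyp_in_A assms by auto
  have "\<not> H \<subseteq> G"
    using subspace_dim_equal[OF sH(1) sG(1)] sH sG assms(3) by auto
  hence "H \<inter> G \<subset> H" by auto
  hence "span (H \<inter> G) \<subset> span H" using sH sG by (simp add: subspace_Int span_eq_iff[THEN iffD2] subspace_inter)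
  hence "dim (H \<inter> G) < dim H" by (rule dim_psubset)
  moreover have "dim (insert x (H \<inter> G)) \<le> dim (H \<inter> G) + 1" by (simp add: dim_insert)
  ultimately show ?thesis using sH by (simp add: dim_span)
qed

lemma generic:
  assumes "open W" "W \<noteq> {}"
  shows "\<exists>y\<in>W. \<forall>H\<in>A. \<forall>G\<in>A. H \<noteq> G \<longrightarrow> y \<notin> span (insert x (H \<inter> G))"
proof (rule ccontr)
  let ?F = "(\<lambda>(H,G). span (insert x (H \<inter> G))) ` {(H,G). H \<in> A \<and> G \<in> A \<and> H \<noteq> G}"
  assume "\<not> ?thesis"
  hence "W \<subseteq> \<Union>?F" by blast
  hence "W \<subseteq> interior (\<Union>?F)" using assms(1) by (simp add: interior_maximal)
  moreover have "interior (\<Union>?F) = {}"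
  proof (rule interior_Union_lowdim)
    show "finite ?F" using finA by (auto intro: finite_subset[of _ "A \<times> A"])
    fix S assume "S \<in> ?F"
    then obtain H G where "H \<in> A" "G \<in> A" "H \<noteq> G" "S = span (insert x (H \<inter> G))" by auto
    thus "closed S \<and> dim S < DIM('a)" using dim_pair by (auto intro: closed_subspace)
  qed
  ultimately show False using assms(2) by auto
qed

lemma inner_seg: "a \<bullet> (x + t *\<^sub>R (y - x)) = a \<bullet> x + t * (a \<bullet> y - a \<bullet> x)"
  by (simp add: inner_add_right inner_diff_right)

lemma step:
  assumes x: "x \<in> U" and y: "y \<in> U"
    and gen: "\<forall>H\<in>A. \<forall>G\<in>A. H \<noteq> G \<longrightarrow> y \<notin> span (insert x (H \<inter> G))"
    and ne: "Dset x y \<noteq> {}"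
  shows "\<exists>H0 w. w \<in> U \<and> H0 \<in> Dset x y \<and> Dset x w = {H0} \<and> Dset w y = Dset x y - {H0}"
proof -
  define S where "S = Dset x y"
  define \<tau> where "\<tau> H = (nv H \<bullet> x) / (nv H \<bullet> x - nv H \<bullet> y)" for H
  have finS: "finite S" using finA unfolding S_def Dset_def by auto
  have SA: "S \<subseteq> A" unfolding S_def Dset_def by auto
  have opp: "(nv H \<bullet> x) * (nv H \<bullet> y) < 0" if "H \<in> S" for H
    using that prod_neg_iff U_nz x y SA unfolding S_def Dset_def by blast
  define t0 where "t0 = Min (\<tau> ` S)"
  have "t0 \<in> \<tau> ` S" unfolding t0_def using finS ne S_def by (intro Min_in) auto
  then obtain H0 where H0: "H0 \<in> S" "\<tau> H0 = t0" by auto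
  have t0le: "t0 \<le> \<tau> G" if "G \<in> S" for G unfolding t0_def using finS that by auto
  have t0pos: "0 < t0" "t0 < 1" using real_opp3[OF opp[OF H0(1)]] H0 unfolding \<tau>_def by auto
  have gt: "\<tau> G > t0" if G: "G \<in> S" "G \<noteq> H0" for G
  proof (rule ccontr)
    assume "\<not> ?thesis"
    hence eq: "\<tau> G = t0" using t0le[OF G(1)] by auto
    define z where "z = x + t0 *\<^sub>R (y - x)"
    have zH: "nv K \<bullet> z = 0" if "K \<in> S" "\<tau> K = t0" for K
      using real_opp3(3)[OF opp[OF that(1)]] that(2) unfolding z_def inner_seg \<tau>_def
      by (simp add: algebra_simps)
    have "z \<in> H0 \<inter> G" using zH[OF H0] zH[OF G(1) eq] nv SA H0(1) G(1) by blast
    hence "z \<in> span (insert x (H0 \<inter> G))" by (simp add: span_base)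
    moreover have "x \<in> span (insert x (H0 \<inter> G))" by (simp add: span_base)
    ultimately have "(1 - 1/t0) *\<^sub>R x + (1/t0) *\<^sub>R z \<in> span (insert x (H0 \<inter> G))"
      by (intro span_add span_mul)
    moreover have "(1 - 1/t0) *\<^sub>R x + (1/t0) *\<^sub>R z = y"
      using t0pos unfolding z_def by (simp add: algebra_simps)
    ultimately show False using gen H0(1) G SA by auto
  qed
  define t2 where "t2 = Min (insert 1 (\<tau> ` (S - {H0})))"
  have t2: "t0 < t2" "t2 \<le> 1" "\<And>G. G \<in> S - {H0} \<Longrightarrow> t2 \<le> \<tau> G"
    unfolding t2_def using finS gt t0pos by (auto simp: Min_gr_iff)
  define t' where "t' = (t0 + t2) / 2"
  have t': "t0 < t'" "t' < t2" "0 \<le> t'" "t' \<le> 1" using t2 t0pos unfolding t'_def by auto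
  define w where "w = x + t' *\<^sub>R (y - x)"
  have sgn: "(nv G \<bullet> w > 0 \<longleftrightarrow> (if G = H0 then nv G \<bullet> y > 0 else nv G \<bullet> x > 0)) \<and> nv G \<bullet> w \<noteq> 0"
    if G: "G \<in> A" for G
  proof (cases "G \<in> S")
    case False
    hence "(nv G \<bullet> x > 0) = (nv G \<bullet> y > 0)" using G unfolding S_def Dset_def by auto
    moreover have "nv G \<bullet> x \<noteq> 0" "nv G \<bullet> y \<noteq> 0" using G U_nz x y by auto
    ultimately have "(nv G \<bullet> x) * (nv G \<bullet> y) > 0"
      by (metis linorder_neqE_linordered_idom mult_neg_neg mult_pos_pos)
    thus ?thesis using real_same[of "nv G \<bullet> x" "nv G \<bullet> y" t'] t' False H0(1)
      unfolding w_def inner_seg by auto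
  next
    case True
    show ?thesis
    proof (cases "G = H0")
      case True
      thus ?thesis using real_opp2[OF opp[OF H0(1)], of t'] t' H0(2)
        unfolding w_def inner_seg \<tau>_def by auto
    next
      case False
      have "t' < \<tau> G" using t2(3)[of G] t' True False by auto
      thus ?thesis using real_opp1[OF opp[OF True], of t'] False
        unfolding w_def inner_seg \<tau>_def by auto
    qed
  qed
  have wU: "w \<in> U" using sgn by (intro in_U) auto
  have H0d: "H0 \<in> A" "(nv H0 \<bullet> x > 0) \<noteq> (nv H0 \<bullet> y > 0)" using H0(1) unfolding S_def Dset_def by auto
  have m1: "G \<in> Dset x w \<longleftrightarrow> G = H0" for G
    using sgn[of G] H0d unfolding Dset_def by (cases "G \<in> A") auto
  have m2: "G \<in> Dset w y \<longleftrightarrow> G \<in> S - {H0}" for G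
    using sgn[of G] H0d unfolding S_def Dset_def by (cases "G \<in> A") auto
  have "Dset x w = {H0}" using m1 by blast
  moreover have "Dset w y = S - {H0}" using m2 by blast
  ultimately show ?thesis using wU H0(1) unfolding S_def by blast
qed

lemma Dset_tri: "Dset x z \<subseteq> Dset x y \<union> Dset y z" unfolding Dset_def by auto

lemma Dset_same: "y' \<in> cell y \<Longrightarrow> Dset x y' = Dset x y" unfolding Dset_def cell_def by auto

lemma Dset_self: "Dset x x = {}" unfolding Dset_def by auto

lemma finite_Dset: "finite (Dset x y)" using finA unfolding Dset_def by auto

lemma adj1_cell: "x \<in> U \<Longrightarrow> y \<in> U \<Longrightarrow> adj1 A (cell x) (cell y) \<longleftrightarrow> card (Dset x y) = 1"
  by (simp add: adj1_def L1sep_cell)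

lemma walk_exists:
  "x \<in> U \<Longrightarrow> y \<in> U \<Longrightarrow> \<exists>p. is_walk (chambers A) (adj1 A) p \<and> hd p = cell x \<and> last p = cell y
     \<and> length p = Suc (card (Dset x y))"
proof (induction "card (Dset x y)" arbitrary: x y)
  case 0
  hence "Dset x y = {}" using finite_Dset by auto
  hence "y \<in> cell x" using 0 unfolding cell_def Dset_def by auto
  hence "cell y = cell x" by (rule cell_eq)
  thus ?case using 0 chambers_eq by (intro exI[of _ "[cell x]"]) (auto simp: is_walk_def)
next
  case (Suc n)
  obtain y' where y': "y' \<in> cell y" "\<forall>H\<in>A. \<forall>G\<in>A. H \<noteq> G \<longrightarrow> y' \<notin> span (insert x (H \<inter> G))"
    using generic[OF open_cell[OF Suc.prems(2)], of x] self_cell[OF Suc.prems(2)] by auto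
  have y'U: "y' \<in> U" "cell y' = cell y" using y'(1) cell_eq unfolding cell_def by auto
  have D: "Dset x y' = Dset x y" using Dset_same[OF y'(1)] .
  obtain H0 w where w: "w \<in> U" "H0 \<in> Dset x y'" "Dset x w = {H0}" "Dset w y' = Dset x y' - {H0}"
    using step[OF Suc.prems(1) y'U(1) y'(2)] D Suc.hyps(2) by fastforce
  have "n = card (Dset w y')" using w(2,4) D Suc.hyps(2) finite_Dset by simp
  from Suc.hyps(1)[OF this w(1) y'U(1)] obtain p where p: "is_walk (chambers A) (adj1 A) p"
    "hd p = cell w" "last p = cell y'" "length p = Suc (card (Dset w y'))" by blast
  have "is_walk (chambers A) (adj1 A) (cell x # p)"
    unfolding is_walk_Cons using p(1,2) adj1_cell[OF Suc.prems(1) w(1)] w(3) chambers_eq Suc.prems(1)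
    by auto
  moreover have "p \<noteq> []" using p(4) by auto
  ultimately show ?case using p y'U(2) Suc.hyps(2) \<open>n = _\<close>
    by (intro exI[of _ "cell x # p"]) auto
qed

lemma L1_tri: "a \<in> chambers A \<Longrightarrow> b \<in> chambers A \<Longrightarrow> c \<in> chambers A \<Longrightarrow>
  L1sep A a c \<subseteq> L1sep A a b \<union> L1sep A b c"
proof -
  assume "a \<in> chambers A" "b \<in> chambers A" "c \<in> chambers A"
  hence "a \<in> cell ` U" "b \<in> cell ` U" "c \<in> cell ` U" using chambers_eq by auto
  then obtain x y z where "x \<in> U" "y \<in> U" "z \<in> U" "a = cell x" "b = cell y" "c = cell z"
    by blast
  thus ?thesis using L1sep_cell[of x y] L1sep_cell[of y z] L1sep_cell[of x z] Dset_tri[of x z y] by simp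
qed

lemma gdist_chambers:
  assumes "x \<in> U" "y \<in> U"
  shows "gdist (chambers A) (adj1 A) (cell x) (cell y) = enat (card (Dset x y))"
proof -
  obtain p where p: "is_walk (chambers A) (adj1 A) p" "hd p = cell x" "last p = cell y"
     "length p = Suc (card (Dset x y))" using walk_exists[OF assms] by blast
  show ?thesis
  proof (rule gdist_eqI[OF p])
    fix q assume q: "is_walk (chambers A) (adj1 A) q" "hd q = cell x" "last q = cell y"
    have "card (L1sep A (hd q) (last q)) \<le> length q - 1"
    proof (rule walk_bound[OF _ _ _ _ q(1)])
      show "\<And>a b c. a \<in> chambers A \<Longrightarrow> b \<in> chambers A \<Longrightarrow> c \<in> chambers A \<Longrightarrow>
        L1sep A a c \<subseteq> L1sep A a b \<union> L1sep A b c" by (rule L1_tri)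
      show "\<And>a b. finite (L1sep A a b)" using finA unfolding L1sep_def by auto
      show "\<And>a b. adj1 A a b \<Longrightarrow> card (L1sep A a b) \<le> 1" by (simp add: adj1_def)
      show "\<And>a. a \<in> chambers A \<Longrightarrow> L1sep A a a = {}" using L1sep_cell Dset_self chambers_eq by auto
    qed
    thus "card (Dset x y) \<le> length q - 1" using q L1sep_cell assms by simp
  qed
qed

lemma Dset_neg: "x \<in> U \<Longrightarrow> Dset x (-x) = A"
  using U_nz unfolding Dset_def by (force simp: less_le)

lemma part1: "gdiameter (chambers A) (adj1 A) = enat (card A)"
proof -
  obtain x where x: "x \<in> U" using U_ne by auto
  have gx: "gdist (chambers A) (adj1 A) (cell x) (cell (-x)) = enat (card A)"
    using gdist_chambers[OF x neg_U[OF x]] Dset_neg[OF x] by simp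
  have bnd: "gdist (chambers A) (adj1 A) c d \<le> enat (card A)" if "c \<in> chambers A" "d \<in> chambers A" for c d
  proof -
    have "c \<in> cell ` U" "d \<in> cell ` U" using that chambers_eq by auto
    then obtain u v where "u \<in> U" "v \<in> U" "c = cell u" "d = cell v" by blast
    moreover have "card (Dset u v) \<le> card A" using finA by (intro card_mono) (auto simp: Dset_def)
    ultimately show ?thesis using gdist_chambers by simp
  qed
  have cx: "cell x \<in> chambers A" "cell (-x) \<in> chambers A" using chambers_eq x neg_U[OF x] by auto
  show ?thesis unfolding gdiameter_def
  proof (intro antisym)
    show "(SUP u\<in>chambers A. SUP v\<in>chambers A. gdist (chambers A) (adj1 A) u v) \<le> enat (card A)"
      using bnd by (intro SUP_least) auto
    have "enat (card A) \<le> (SUP v\<in>chambers A. gdist (chambers A) (adj1 A) (cell x) v)"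
      using cx gx by (metis SUP_upper)
    also have "\<dots> \<le> (SUP u\<in>chambers A. SUP v\<in>chambers A. gdist (chambers A) (adj1 A) u v)"
      using cx(1) by (rule SUP_upper)
    finally show "enat (card A) \<le> (SUP u\<in>chambers A. SUP v\<in>chambers A. gdist (chambers A) (adj1 A) u v)" .
  qed
qed

lemma adj1_the: "adj1 A a b \<Longrightarrow> L1sep A a b = {THE H. L1sep A a b = {H}}"
proof -
  assume "adj1 A a b"
  hence "card (L1sep A a b) = 1" unfolding adj1_def .
  then obtain H where H: "L1sep A a b = {H}" by (rule card_1_singletonE)
  hence "(THE H. L1sep A a b = {H}) = H" by (intro the_equality) auto
  thus ?thesis using H by simp
qed

lemma walk_nth: "is_walk V E r \<Longrightarrow> Suc i < length r \<Longrightarrow> E (r ! i) (r ! Suc i) \<and> r ! i \<in> V \<and> r ! Suc i \<in> V"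
  unfolding is_walk_def by (auto dest: nth_mem)

lemma length_crossings: "length (crossings A r) = length r - 1"
  unfolding crossings_def by simp

lemma nth_crossings: "i < length r - 1 \<Longrightarrow> crossings A r ! i = (THE H. L1sep A (r ! i) (r ! Suc i) = {H})"
  unfolding crossings_def by simp

lemma walk_cross:
  assumes "is_walk (chambers A) (adj1 A) r" "i < length r - 1"
  shows "L1sep A (r ! i) (r ! Suc i) = {crossings A r ! i}"
  using adj1_the walk_nth[OF assms(1), of i] assms(2) nth_crossings[OF assms(2)] by auto

lemma L1_self: "a \<in> chambers A \<Longrightarrow> L1sep A a a = {}"
  using L1sep_cell Dset_self chambers_eq by auto

lemma cross_cover:
  assumes w: "is_walk (chambers A) (adj1 A) r"
  shows "k < length r \<Longrightarrow> L1sep A (hd r) (r ! k) \<subseteq> set (take k (crossings A r))"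
proof (induction k)
  case 0
  have "hd r \<in> chambers A" using w by (auto simp: is_walk_def)
  moreover have "r \<noteq> []" using w by (simp add: is_walk_def)
  ultimately show ?case using L1_self by (simp add: hd_conv_nth)
next
  case (Suc k)
  have k: "k < length r - 1" using Suc.prems by simp
  have ch: "hd r \<in> chambers A" "r ! k \<in> chambers A" "r ! Suc k \<in> chambers A"
    using w Suc.prems walk_nth[OF w, of k] by (auto simp: is_walk_def)
  have "L1sep A (hd r) (r ! Suc k) \<subseteq> L1sep A (hd r) (r ! k) \<union> L1sep A (r ! k) (r ! Suc k)"
    using L1_tri ch by blast
  also have "\<dots> \<subseteq> set (take k (crossings A r)) \<union> {crossings A r ! k}"
    using Suc.IH Suc.prems walk_cross[OF w k] by auto
  also have "\<dots> = set (take (Suc k) (crossings A r))"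
    using k length_crossings[of r] by (simp add: take_Suc_conv_app_nth)
  finally show ?case .
qed

lemma cross_set:
  assumes w: "is_walk (chambers A) (adj1 A) r" and len: "length r = Suc (card (L1sep A (hd r) (last r)))"
  shows "set (crossings A r) = L1sep A (hd r) (last r) \<and> distinct (crossings A r)"
proof -
  have "r \<noteq> []" using len by auto
  hence "last r = r ! (length r - 1)" by (simp add: last_conv_nth)
  hence sub: "L1sep A (hd r) (last r) \<subseteq> set (crossings A r)"
    using cross_cover[OF w, of "length r - 1"] len length_crossings[of r] by auto
  have fin: "finite (L1sep A (hd r) (last r))" using finA unfolding L1sep_def by auto
  have "card (set (crossings A r)) \<le> length (crossings A r)" by (rule card_length)
  also have "\<dots> = card (L1sep A (hd r) (last r))" using len length_crossings[of r] by simp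
  finally have c: "card (set (crossings A r)) \<le> card (L1sep A (hd r) (last r))" .
  have eq: "L1sep A (hd r) (last r) = set (crossings A r)"
    using card_subset_eq[OF _ sub] c card_mono[OF _ sub] by auto
  moreover have "distinct (crossings A r)"
    using eq c card_length[of "crossings A r"] len length_crossings[of r]
    by (intro card_distinct) simp
  ultimately show ?thesis by simp
qed

lemma Dset_negneg: "x \<in> U \<Longrightarrow> y \<in> U \<Longrightarrow> Dset (-x) (-y) = Dset x y"
  using U_nz unfolding Dset_def by (force simp: less_le)

lemma neg_L1:
  assumes "c \<in> chambers A" "d \<in> chambers A"
  shows "uminus ` c \<in> chambers A" "L1sep A (uminus ` d) (uminus ` c) = L1sep A c d"
proof -
  have "c \<in> cell ` U" "d \<in> cell ` U" using assms chambers_eq by auto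
  then obtain x y where xy: "x \<in> U" "y \<in> U" "c = cell x" "d = cell y" by blast
  show "uminus ` c \<in> chambers A" using xy cell_neg neg_U chambers_eq by auto
  show "L1sep A (uminus ` d) (uminus ` c) = L1sep A c d"
    using xy cell_neg L1sep_cell neg_U Dset_negneg Dset_sym by simp
qed

lemma rev_walk:
  assumes w: "is_walk (chambers A) (adj1 A) r"
  defines "r' \<equiv> rev (map ((`) uminus) r)"
  shows "is_walk (chambers A) (adj1 A) r' \<and> crossings A r' = rev (crossings A r)"
proof -
  let ?n = "length r"
  have ch: "set r \<subseteq> chambers A" "r \<noteq> []" using w by (auto simp: is_walk_def)
  have nth': "r' ! i = uminus ` (r ! (?n - Suc i))" if "i < ?n" for i
    using that unfolding r'_def by (simp add: rev_nth)
  have step: "L1sep A (r' ! i) (r' ! Suc i) = L1sep A (r ! (?n - Suc (Suc i))) (r ! Suc (?n - Suc (Suc i)))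
     \<and> adj1 A (r' ! i) (r' ! Suc i)"
    if i: "Suc i < ?n" for i
  proof -
    define j where "j = ?n - Suc (Suc i)"
    have j: "Suc j < ?n" "?n - Suc i = Suc j" using i unfolding j_def by auto
    have wj: "adj1 A (r ! j) (r ! Suc j)" "r ! j \<in> chambers A" "r ! Suc j \<in> chambers A"
      using walk_nth[OF w j(1)] by auto
    have "L1sep A (r' ! i) (r' ! Suc i) = L1sep A (r ! j) (r ! Suc j)"
      using nth'[of i] nth'[of "Suc i"] i j neg_L1(2)[OF wj(2,3)] by (simp add: j_def)
    thus ?thesis using wj(1) unfolding adj1_def j_def by simp
  qed
  have "is_walk (chambers A) (adj1 A) r'"
    unfolding is_walk_def
  proof (intro conjI allI impI)
    show "r' \<noteq> []" using ch unfolding r'_def by simp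
    show "set r' \<subseteq> chambers A" using ch neg_L1(1) unfolding r'_def by auto
    fix i assume "Suc i < length r'"
    thus "adj1 A (r' ! i) (r' ! Suc i)" using step unfolding r'_def by simp
  qed
  moreover have "crossings A r' = rev (crossings A r)"
  proof (rule nth_equalityI)
    show "length (crossings A r') = length (rev (crossings A r))"
      by (simp add: length_crossings r'_def)
    fix i assume "i < length (crossings A r')"
    hence i: "Suc i < ?n" by (simp add: length_crossings r'_def)
    have li: "i < length r' - 1" using i by (simp add: r'_def)
    have "crossings A r' ! i = (THE H. L1sep A (r ! (?n - Suc (Suc i))) (r ! Suc (?n - Suc (Suc i))) = {H})"
      using nth_crossings[OF li] step[OF i] by simp
    also have "\<dots> = crossings A r ! (?n - Suc (Suc i))"
      using i by (intro nth_crossings[symmetric]) auto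
    also have "\<dots> = rev (crossings A r) ! i"
      using i by (simp add: rev_nth length_crossings)
    finally show "crossings A r' ! i = rev (crossings A r) ! i" .
  qed
  ultimately show ?thesis by simp
qed

lemma fin_Lcodim: "finite (Lcodim A i)"
proof -
  have "Lcodim A i \<subseteq> Inter ` Pow A" unfolding Lcodim_def by auto
  moreover have "finite (Inter ` Pow A)" using finA by simp
  ultimately show ?thesis by (rule finite_subset)
qed

lemma Lcodim_two: "X \<in> Lcodim A 2 \<Longrightarrow> 2 \<le> card {H\<in>A. X \<subseteq> H}"
proof (rule ccontr)
  assume X: "X \<in> Lcodim A 2" and "\<not> 2 \<le> card {H\<in>A. X \<subseteq> H}"
  hence c: "card {H\<in>A. X \<subseteq> H} \<le> 1" by simp
  obtain S where S: "S \<subseteq> A" "S \<noteq> {}" "X = \<Inter>S" "dim X + 2 = DIM('a)"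
    using X unfolding Lcodim_def by auto
  have sub: "S \<subseteq> {H\<in>A. X \<subseteq> H}" using S by auto
  have fin: "finite {H\<in>A. X \<subseteq> H}" using finA by auto
  have "card S \<le> 1" using card_mono[OF fin sub] c by simp
  moreover have "finite S" using S(1) finA finite_subset by blast
  ultimately obtain H where "S = {H}" using S(2)
    by (metis card_0_eq card_1_singletonE le_eq_less_or_eq less_one)
  hence "X = H" "H \<in> A" using S by auto
  hence "dim X = DIM('a) - 1" using hyp_in_A by auto
  thus False using S(4) by simp
qed

lemma distinct_rev_neq: "distinct ys \<Longrightarrow> 2 \<le> length ys \<Longrightarrow> rev ys \<noteq> ys"
proof
  assume d: "distinct ys" and l: "2 \<le> length ys" and e: "rev ys = ys"
  have "rev ys ! 0 = ys ! (length ys - 1)" using l by (subst rev_nth) auto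
  hence "ys ! 0 = ys ! (length ys - 1)" using e by simp
  moreover have "0 < length ys" "length ys - 1 < length ys" using l by auto
  ultimately have "(0::nat) = length ys - 1" using nth_eq_iff_index_eq[OF d] by blast
  thus False using l by simp
qed

lemma part2:
  assumes c0: "c0 \<in> chambers A"
  shows "enat (card (Lcodim A 2)) \<le> gdiameter (min_galleries A c0) (adj2 A)"
proof -
  have "c0 \<in> cell ` U" using c0 chambers_eq by auto
  then obtain x0 where x0: "x0 \<in> U" "c0 = cell x0" by blast
  have nc: "uminus ` c0 = cell (-x0)" using x0 cell_neg by simp
  obtain r where r: "is_walk (chambers A) (adj1 A) r" "hd r = cell x0" "last r = cell (-x0)"
    "length r = Suc (card A)"
    using walk_exists[OF x0(1) neg_U[OF x0(1)]] Dset_neg[OF x0(1)] by auto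
  have gd: "gdist (chambers A) (adj1 A) c0 (uminus ` c0) = enat (card A)"
    using gdist_chambers[OF x0(1) neg_U[OF x0(1)]] Dset_neg[OF x0(1)] x0 nc by simp
  have L1A: "L1sep A (hd r) (last r) = A"
    using r L1sep_cell[OF x0(1) neg_U[OF x0(1)]] Dset_neg[OF x0(1)] by simp
  have rm: "r \<in> min_galleries A c0" unfolding min_galleries_def using r gd x0 nc by simp
  define r' where "r' = rev (map ((`) uminus) r)"
  have rw: "is_walk (chambers A) (adj1 A) r'" "crossings A r' = rev (crossings A r)"
    using rev_walk[OF r(1)] unfolding r'_def by auto
  have "r \<noteq> []" using r by auto
  have "hd r' = uminus ` last r" unfolding r'_def using \<open>r \<noteq> []\<close> by (simp add: hd_rev last_map)
  also have "\<dots> = uminus ` uminus ` c0" using r(3) nc by simp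
  also have "\<dots> = c0" by (simp add: image_image)
  finally have hr': "hd r' = c0" .
  have lr': "last r' = uminus ` c0" unfolding r'_def using \<open>r \<noteq> []\<close> r(2) x0 by (simp add: last_rev hd_map)
  have r'm: "r' \<in> min_galleries A c0" unfolding min_galleries_def
    using rw hr' lr' gd r(4) by (simp add: r'_def)
  have cs: "set (crossings A r) = A" "distinct (crossings A r)"
    using cross_set[OF r(1)] L1A r(4) by auto
  have L2: "L2sep A r r' = Lcodim A 2"
  proof (intro set_eqI iffI)
    fix X assume "X \<in> L2sep A r r'" thus "X \<in> Lcodim A 2" unfolding L2sep_def by auto
  next
    fix X assume X: "X \<in> Lcodim A 2"
    define ys where "ys = filter (\<lambda>H. X \<subseteq> H) (crossings A r)"
    have "distinct ys" using cs unfolding ys_def by simp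
    moreover have "set ys = {H\<in>A. X \<subseteq> H}" using cs unfolding ys_def by auto
    ultimately have "length ys = card {H\<in>A. X \<subseteq> H}" by (metis distinct_card)
    hence "2 \<le> length ys" using Lcodim_two[OF X] by simp
    hence "rev ys \<noteq> ys" using distinct_rev_neq \<open>distinct ys\<close> by blast
    moreover have "filter (\<lambda>H. X \<subseteq> H) (crossings A r') = rev ys"
      unfolding ys_def rw(2) by (simp add: rev_filter)
    ultimately show "X \<in> L2sep A r r'" unfolding L2sep_def using X ys_def by auto
  qed
  have "enat (card (L2sep A r r')) \<le> gdist (min_galleries A c0) (adj2 A) r r'"
  proof (rule gdist_lowerI)
    fix q assume q: "is_walk (min_galleries A c0) (adj2 A) q" "hd q = r" "last q = r'"
    have "card (L2sep A (hd q) (last q)) \<le> length q - 1"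
    proof (rule walk_bound[OF _ _ _ _ q(1)])
      show "\<And>a b c. L2sep A a c \<subseteq> L2sep A a b \<union> L2sep A b c" unfolding L2sep_def by auto
      show "\<And>a b. finite (L2sep A a b)"
        using fin_Lcodim unfolding L2sep_def by (auto intro: finite_subset[OF _ fin_Lcodim])
      show "\<And>a b. adj2 A a b \<Longrightarrow> card (L2sep A a b) \<le> 1" by (simp add: adj2_def)
      show "\<And>a. L2sep A a a = {}" unfolding L2sep_def by auto
    qed
    thus "card (L2sep A r r') \<le> length q - 1" using q by simp
  qed
  also have "\<dots> \<le> (SUP v\<in>min_galleries A c0. gdist (min_galleries A c0) (adj2 A) r v)"
    using r'm by (rule SUP_upper)
  also have "\<dots> \<le> gdiameter (min_galleries A c0) (adj2 A)"
    unfolding gdiameter_def using rm by (rule SUP_upper)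
  finally show ?thesis using L2 by simp
qed

end

theorem corollary3p13:
  fixes A :: "'a::euclidean_space set set"
  assumes "central_essential_arrangement A"
  shows "gdiameter (chambers A) (adj1 A) = enat (card A)
    \<and> (\<forall>c0 \<in> chambers A.
         gdiameter (min_galleries A c0) (adj2 A) \<ge> enat (card (Lcodim A 2)))"
proof -
  interpret arr A by (rule arr.intro) (rule assms)
  show ?thesis using part1 part2 by blast
qed

end
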